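(* Let $(G,\cdot)$ be a finite group and let $\psi\in\operatorname{End}(G,\cdot)$ be non-trivial and idempotent ($\psi\circ\psi=\psi$) with $\psi([[G,\psi],G])\le Z(G,\cdot)$. Let $N=\{h\mapsto g\,\psi(g)^{-1}h\,\psi(g) : g\in G\}\le\operatorname{Perm}(G)$. Then $N\cong(\ker\psi,\cdot)\times(\psi(G),\cdot)$.
   Context: $\operatorname{Perm}(G)$ is the group of permutations of the set $G$. For $\psi\in\operatorname{End}(G,\cdot)$, $[g,\psi]=g\cdot\psi(g)^{-1}$ and $[G,\psi]$ is the subgroup generated by these elements; $[x,y]=xyx^{-1}y^{-1}$ and $[A,B]$ is the subgroup generated by $[a,b]$, $a\in A,b\in B$; $Z(G,\cdot)$ is the centre. *)

theory Defs
  imports "HOL-Algebra.Algebra"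
begin

definition group_centre :: "('a, 'b) monoid_scheme \<Rightarrow> 'a set" where
  "group_centre G = {z \<in> carrier G. \<forall>x \<in> carrier G. z \<otimes>\<^bsub>G\<^esub> x = x \<otimes>\<^bsub>G\<^esub> z}"

definition endo_comm :: "('a, 'b) monoid_scheme \<Rightarrow> ('a \<Rightarrow> 'a) \<Rightarrow> 'a set" where
  "endo_comm G \<psi> = generate G ((\<lambda>g. g \<otimes>\<^bsub>G\<^esub> inv\<^bsub>G\<^esub> (\<psi> g)) ` carrier G)"

definition comm_subgroup :: "('a, 'b) monoid_scheme \<Rightarrow> 'a set \<Rightarrow> 'a set \<Rightarrow> 'a set" where
  "comm_subgroup G A B = generate G
     (\<Union>a \<in> A. \<Union>b \<in> B. {a \<otimes>\<^bsub>G\<^esub> b \<otimes>\<^bsub>G\<^esub> inv\<^bsub>G\<^esub> a \<otimes>\<^bsub>G\<^esub> inv\<^bsub>G\<^esub> b})"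

text \<open>The set N of permutations h \<mapsto> g psi(g)^-1 h psi(g) of carrier G,
  as elements of BijGroup (carrier G) (extensional functions).\<close>
definition N_perm :: "('a, 'b) monoid_scheme \<Rightarrow> ('a \<Rightarrow> 'a) \<Rightarrow> ('a \<Rightarrow> 'a) set" where
  "N_perm G \<psi> = (\<lambda>g. restrict (\<lambda>h. g \<otimes>\<^bsub>G\<^esub> inv\<^bsub>G\<^esub> (\<psi> g) \<otimes>\<^bsub>G\<^esub> h \<otimes>\<^bsub>G\<^esub> \<psi> g) (carrier G)) ` carrier G"

end

theory Submission
  imports Defs
begin

lemma (in group) aux:
  fixes \<psi> :: "'a \<Rightarrow> 'a"
  assumes "finite (carrier G)"
    and "\<psi> \<in> hom G G"
    and "\<exists>g \<in> carrier G. \<psi> g \<noteq> \<one>\<^bsub>G\<^esub>"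
    and "\<forall>g \<in> carrier G. \<psi> (\<psi> g) = \<psi> g"
    and "\<psi> ` comm_subgroup G (endo_comm G \<psi>) (carrier G) \<subseteq> group_centre G"
  shows "subgroup (N_perm G \<psi>) (BijGroup (carrier G))
    \<and> (BijGroup (carrier G)) \<lparr>carrier := N_perm G \<psi>\<rparr>
        \<cong> (G \<lparr>carrier := kernel G G \<psi>\<rparr>) \<times>\<times> (G \<lparr>carrier := \<psi> ` carrier G\<rparr>)"
proof -
  interpret gh: group_hom G G \<psi> by (simp add: group_hom_def group_hom_axioms_def is_group assms(2))
  have idem: "\<And>g. g \<in> carrier G \<Longrightarrow> \<psi> (\<psi> g) = \<psi> g" using assms(4) by blast
  have psiC: "\<And>g. g \<in> carrier G \<Longrightarrow> \<psi> g \<in> carrier G" using assms(2) by (auto simp: hom_def)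
  define S where "S = carrier G"
  define K where "K = kernel G G \<psi>"
  define I where "I = \<psi> ` carrier G"
  have Kc: "K \<subseteq> carrier G" by (auto simp: K_def kernel_def)
  have Ic: "I \<subseteq> carrier G" using psiC by (auto simp: I_def)
  have sK: "subgroup K G" unfolding K_def by (rule gh.subgroup_kernel)
  have sI: "subgroup I G" unfolding I_def by (rule gh.img_is_subgroup)
  define P where "P = (G\<lparr>carrier := K\<rparr>) \<times>\<times> (G\<lparr>carrier := I\<rparr>)"
  have gP: "group P" unfolding P_def
    by (intro DirProd_group subgroup.subgroup_is_group[OF sK] subgroup.subgroup_is_group[OF sI]) (rule is_group)+
  define \<Phi> where "\<Phi> = (\<lambda>(k,x). restrict (\<lambda>h. k \<otimes> h \<otimes> inv x) (carrier G))"
  have PhiB: "\<Phi> (k,x) \<in> Bij S" if "k \<in> carrier G" "x \<in> carrier G" for k x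
  proof -
    have "bij_betw (\<lambda>h. k \<otimes> h \<otimes> inv x) S S"
      by (rule bij_betw_byWitness[where f'="\<lambda>h. inv k \<otimes> h \<otimes> x"]) (auto simp: S_def that m_assoc, simp_all add: that m_assoc[symmetric])
    then have "bij_betw (\<Phi> (k,x)) S S"
      by (rule bij_betw_cong[THEN iffD1, rotated]) (auto simp: \<Phi>_def S_def)
    then show ?thesis by (auto simp: Bij_def \<Phi>_def S_def)
  qed
  have PhiM: "compose S (\<Phi> (k,x)) (\<Phi> (k',x')) = \<Phi> (k \<otimes> k', x \<otimes> x')"
    if "k \<in> carrier G" "x \<in> carrier G" "k' \<in> carrier G" "x' \<in> carrier G" for k x k' x'
    by (rule ext) (simp add: compose_def \<Phi>_def S_def that inv_mult_group m_assoc)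
  have hom: "\<Phi> \<in> hom P (BijGroup S)"
  proof (rule homI)
    fix p assume "p \<in> carrier P"
    then show "\<Phi> p \<in> carrier (BijGroup S)" using Kc Ic PhiB
      by (auto simp: P_def BijGroup_def)
  next
    fix p q assume "p \<in> carrier P" "q \<in> carrier P"
    then obtain k x k' x' where e: "p = (k,x)" "q = (k',x')" and c: "k \<in> carrier G" "x \<in> carrier G" "k' \<in> carrier G" "x' \<in> carrier G"
      using Kc Ic by (auto simp: P_def) blast
    then show "\<Phi> (p \<otimes>\<^bsub>P\<^esub> q) = \<Phi> p \<otimes>\<^bsub>BijGroup S\<^esub> \<Phi> q"
      using PhiB[OF c(1,2)] PhiB[OF c(3,4)] PhiM[OF c]
      by (simp add: P_def BijGroup_def DirProd_def)
  qed
  interpret ph: group_hom P "BijGroup S" \<Phi>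
    by (simp add: group_hom_def group_hom_axioms_def gP group_BijGroup hom)
  have inj: "inj_on \<Phi> (carrier P)"
  proof (rule inj_onI)
    fix p q assume p: "p \<in> carrier P" and q: "q \<in> carrier P" and e: "\<Phi> p = \<Phi> q"
    obtain k x where pk: "p = (k,x)" "k \<in> K" "x \<in> I" using p by (auto simp: P_def)
    obtain k' x' where qk: "q = (k',x')" "k' \<in> K" "x' \<in> I" using q by (auto simp: P_def)
    have c: "k \<in> carrier G" "x \<in> carrier G" "k' \<in> carrier G" "x' \<in> carrier G"
      using pk qk Kc Ic by auto
    have "\<Phi> p \<one> = \<Phi> q \<one>" using e by simp
    then have e1: "k \<otimes> inv x = k' \<otimes> inv x'" using pk qk c by (simp add: \<Phi>_def)
    define d where "d = inv k' \<otimes> k"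
    have d2: "d = inv x' \<otimes> x"
    proof -
      have f1: "inv k' \<otimes> (k \<otimes> inv x) \<otimes> x = inv k' \<otimes> (k' \<otimes> inv x') \<otimes> x" using e1 by simp
      have f2: "inv k' \<otimes> (k \<otimes> inv x) \<otimes> x = inv k' \<otimes> k"
        using c by (simp add: m_assoc)
      have f4: "inv k' \<otimes> (k' \<otimes> inv x') = (inv k' \<otimes> k') \<otimes> inv x'"
        using c by (intro m_assoc[symmetric]) simp_all
      have f5: "(inv k' \<otimes> k') \<otimes> inv x' = inv x'" using c by simp
      have f3: "inv k' \<otimes> (k' \<otimes> inv x') \<otimes> x = inv x' \<otimes> x"
        using f4 f5 by argo
      show ?thesis unfolding d_def using f1 f2 f3 by argo
    qed
    have dK: "\<psi> d = \<one>" using pk(2) qk(2) c by (simp add: d_def K_def kernel_def)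
    obtain y y' where y: "y \<in> carrier G" "x = \<psi> y" "y' \<in> carrier G" "x' = \<psi> y'"
      using pk(3) qk(3) by (auto simp: I_def)
    have "\<psi> (inv x' \<otimes> x) = inv x' \<otimes> x" using y c
      by (simp add: gh.hom_mult gh.hom_inv idem)
    then have "\<psi> d = d" using d2 by simp
    then have d1: "d = \<one>" using dK by simp
    have "inv k' \<otimes> k = \<one>" using d1 unfolding d_def .
    moreover have "inv x' \<otimes> x = \<one>" using d1 d2 by simp
    ultimately have "inv k' \<otimes> k = \<one>" "inv x' \<otimes> x = \<one>" by simp_all
    then have "k = k' \<otimes> \<one>" "x = x' \<otimes> \<one>" using c by (simp_all only: inv_solve_left' one_closed)
    then have "k = k'" "x = x'" using c by simp_all
    then show "p = q" using pk qk by simp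
  qed
  have Nim: "N_perm G \<psi> = \<Phi> ` carrier P"
  proof
    show "N_perm G \<psi> \<subseteq> \<Phi> ` carrier P"
    proof
      fix f assume "f \<in> N_perm G \<psi>"
      then obtain g where g: "g \<in> carrier G"
        "f = restrict (\<lambda>h. g \<otimes> inv (\<psi> g) \<otimes> h \<otimes> \<psi> g) (carrier G)"
        by (auto simp: N_perm_def)
      have "\<psi> g \<in> carrier G" using psiC g by simp
      have kK: "g \<otimes> inv (\<psi> g) \<in> K" using g psiC
        by (simp add: K_def kernel_def idem gh.hom_mult gh.hom_inv)
      have "inv (\<psi> g) = \<psi> (inv g)" using g by (simp add: gh.hom_inv)
      then have xI: "inv (\<psi> g) \<in> I" using g unfolding I_def by (metis inv_closed image_eqI)
      have "f = \<Phi> (g \<otimes> inv (\<psi> g), inv (\<psi> g))" using g psiC by (simp add: \<Phi>_def)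
      then show "f \<in> \<Phi> ` carrier P" using kK xI by (auto simp: P_def)
    qed
  next
    show "\<Phi> ` carrier P \<subseteq> N_perm G \<psi>"
    proof
      fix f assume "f \<in> \<Phi> ` carrier P"
      then obtain k x where kx: "k \<in> K" "x \<in> I" "f = \<Phi> (k,x)" by (auto simp: P_def)
      obtain y where y: "y \<in> carrier G" "x = \<psi> y" using kx by (auto simp: I_def)
      have c: "k \<in> carrier G" "x \<in> carrier G" using kx Kc Ic by auto
      have pk: "\<psi> k = \<one>" using kx by (simp add: K_def kernel_def)
      have px: "\<psi> x = x" using y idem by simp
      define g where "g = k \<otimes> inv x"
      have gc: "g \<in> carrier G" using c by (simp add: g_def)
      have pg: "\<psi> g = inv x" using c pk px by (simp add: g_def gh.hom_mult gh.hom_inv)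
      have e1: "g \<otimes> inv (\<psi> g) = k" unfolding pg unfolding g_def using c by (simp add: m_assoc)
      have "f = restrict (\<lambda>h. g \<otimes> inv (\<psi> g) \<otimes> h \<otimes> \<psi> g) (carrier G)"
        unfolding e1 unfolding pg using c kx(3) by (simp add: \<Phi>_def)
      then show "f \<in> N_perm G \<psi>" using gc by (auto simp: N_perm_def)
    qed
  qed
  have sub: "subgroup (N_perm G \<psi>) (BijGroup (carrier G))"
    using ph.img_is_subgroup by (simp add: Nim S_def)
  have iso: "\<Phi> \<in> iso P ((BijGroup (carrier G)) \<lparr>carrier := N_perm G \<psi>\<rparr>)"
  proof (rule isoI)
    show "\<Phi> \<in> hom P (BijGroup (carrier G)\<lparr>carrier := N_perm G \<psi>\<rparr>)"
      using hom unfolding hom_def by (auto simp: Nim S_def)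
    show "bij_betw \<Phi> (carrier P) (carrier (BijGroup (carrier G)\<lparr>carrier := N_perm G \<psi>\<rparr>))"
      using inj by (simp add: bij_betw_def Nim)
  qed
  have "P \<cong> (BijGroup (carrier G)) \<lparr>carrier := N_perm G \<psi>\<rparr>" using iso by (rule is_isoI)
  then have "(BijGroup (carrier G)) \<lparr>carrier := N_perm G \<psi>\<rparr> \<cong> P"
    by (rule group.iso_sym[OF gP])
  then show ?thesis using sub by (simp add: P_def K_def I_def)
qed

theorem mainTheorem10:
  fixes G :: "('a, 'b) monoid_scheme" and \<psi> :: "'a \<Rightarrow> 'a"
  assumes "group G"
    and "finite (carrier G)"
    and "\<psi> \<in> hom G G"
    and "\<exists>g \<in> carrier G. \<psi> g \<noteq> \<one>\<^bsub>G\<^esub>"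
    and "\<forall>g \<in> carrier G. \<psi> (\<psi> g) = \<psi> g"
    and "\<psi> ` comm_subgroup G (endo_comm G \<psi>) (carrier G) \<subseteq> group_centre G"
  shows "subgroup (N_perm G \<psi>) (BijGroup (carrier G))
    \<and> (BijGroup (carrier G)) \<lparr>carrier := N_perm G \<psi>\<rparr>
        \<cong> (G \<lparr>carrier := kernel G G \<psi>\<rparr>) \<times>\<times> (G \<lparr>carrier := \<psi> ` carrier G\<rparr>)"
  using group.aux[OF assms(1)] assms by blast

end
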